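(* Suppose $\gamma>0$ and $\int^\infty\frac{\mathrm{d}x}{R(x)}<\infty$. Then for all $b>0$ and all $\lambda>0$, $\sum_{n=0}^\infty\lambda^nW_n(b)<\infty$.
   Context: Let $\Psi(\lambda)=\gamma\lambda+\frac{\sigma^2}{2}\lambda^2+\int_0^\infty(e^{-\lambda z}-1+\lambda z)\,\pi(\mathrm{d}z)$ for $\lambda\ge0$, with $\sigma\ge0$ and $\pi$ a measure on $(0,\infty)$ with $\int_0^\infty(z\wedge z^2)\pi(\mathrm{d}z)<\infty$. $R$ is continuous on $[0,\infty)$ and strictly positive on $(0,\infty)$. $W$ is the scale function associated with $\Psi$: $W(x)=0$ for $x<0$, $W$ continuous strictly increasing on $[0,\infty)$ with $\int_0^\infty e^{-qy}W(y)\mathrm{d}y=1/\Psi(q)$ for $q>0$. $W_0(x)=1$ and $W_{n+1}(x)=\int_x^\infty\frac{W(z-x)}{R(z)}W_n(z)\,\mathrm{d}z$ for $x\ge0$, $n\ge0$. *)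

theory Defs
  imports "HOL-Analysis.Analysis"
begin

text \<open>Laplace exponent Psi of a spectrally negative Levy process with Levy measure pi
  (a measure on the reals carried by the half-line (0,infinity)).\<close>
definition Psi :: "real \<Rightarrow> real \<Rightarrow> real measure \<Rightarrow> real \<Rightarrow> real" where
  "Psi \<gamma> \<sigma> \<pi> l = \<gamma> * l + \<sigma>\<^sup>2 / 2 * l\<^sup>2
     + (\<integral>z\<in>{0<..}. (exp (- l * z) - 1 + l * z) \<partial>\<pi>)"

text \<open>The iterated functions W_n, valued in the extended nonnegative reals
  (the defining integrals have nonnegative integrands).\<close>
primrec Wn :: "(real \<Rightarrow> real) \<Rightarrow> (real \<Rightarrow> real) \<Rightarrow> nat \<Rightarrow> real \<Rightarrow> ennreal" where
  "Wn W R 0 x = 1"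
| "Wn W R (Suc n) x = (\<integral>\<^sup>+ z\<in>{x..}. ennreal (W (z - x) / R z) * Wn W R n z \<partial>lborel)"

end

theory Submission imports Defs begin

lemma Psi_ge:
  assumes "q > 0" "\<gamma> > 0"
  shows "Psi \<gamma> \<sigma> \<pi> q \<ge> \<gamma> * q"
proof -
  have "0 \<le> (\<integral>z\<in>{0<..}. (exp (- q * z) - 1 + q * z) \<partial>\<pi>)"
    unfolding set_lebesgue_integral_def
  proof (rule integral_nonneg_AE, rule AE_I2)
    fix z
    have "1 + (- q * z) \<le> exp (- q * z)" by (rule exp_ge_add_one_self)
    then show "0 \<le> indicator {0<..} z *\<^sub>R (exp (- q * z) - 1 + q * z)"
      by (auto simp: indicator_def)
  qed
  moreover have "0 \<le> \<sigma>\<^sup>2 / 2 * q\<^sup>2" by simp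
  ultimately show ?thesis unfolding Psi_def by linarith
qed

lemma W_bounded:
  fixes W :: "real \<Rightarrow> real"
  assumes W_neg: "\<And>x. x < 0 \<Longrightarrow> W x = 0"
    and W_mono: "strict_mono_on {0..} W"
    and W_laplace: "\<And>q. q > 0 \<Longrightarrow>
          ((\<lambda>y. exp (- q * y) * W y) has_integral (1 / Psi \<gamma> \<sigma> \<pi> q)) {0..}"
    and gamma_pos: "\<gamma> > 0"
  shows "\<exists>M\<ge>0. \<forall>y. W y \<le> M"
proof -
  define a where "a = \<bar>W 0\<bar>"
  define M where "M = exp 1 * (1/\<gamma> + a) + a"
  have a0: "a \<ge> 0" unfolding a_def by simp
  have M0: "M \<ge> 0" unfolding M_def using a0 gamma_pos by (simp add: add_nonneg_nonneg)
  have "W y \<le> M" for y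
  proof (cases "y > 0")
    case False
    then show ?thesis
    proof (cases "y = 0")
      case True then show ?thesis unfolding M_def a_def using gamma_pos
        by (smt (verit) divide_pos_pos exp_gt_zero mult_nonneg_nonneg)
    next
      case False
      with \<open>\<not> y > 0\<close> have "y < 0" by simp
      then show ?thesis using W_neg M0 by simp
    qed
  next
    case True
    define q where "q = 1 / y"
    have q0: "q > 0" using True unfolding q_def by simp
    have qy: "q * y = 1" using True unfolding q_def by simp
    have Wy0: "W 0 \<le> W y" using True by (intro strict_mono_on_leD[OF W_mono]) auto
    define g where "g = (\<lambda>x. - a * exp (- q * x) + (if x \<in> {y..} then (W y + a) * exp (- q * x) else 0))"
    have i1: "((\<lambda>x. - a * exp (- q * x)) has_integral (- a * (exp (- q * 0) / q))) {0..}"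
      by (intro has_integral_mult_right has_integral_exp_minus_to_infinity q0)
    have "((\<lambda>x. (W y + a) * exp (- q * x)) has_integral ((W y + a) * (exp (- q * y) / q))) ({y..} \<inter> {0..})"
    proof -
      have "{y..} \<inter> {0..} = {y::real..}" using True by auto
      moreover have "((\<lambda>x. (W y + a) * exp (- q * x)) has_integral ((W y + a) * (exp (- q * y) / q))) {y..}"
        by (intro has_integral_mult_right has_integral_exp_minus_to_infinity q0)
      ultimately show ?thesis by simp
    qed
    then have i2: "((\<lambda>x. if x \<in> {y..} then (W y + a) * exp (- q * x) else 0) has_integral ((W y + a) * (exp (- q * y) / q))) {0..}"
      by (subst has_integral_restrict_Int)
    have ig: "(g has_integral (- a * (exp (- q * 0) / q) + (W y + a) * (exp (- q * y) / q))) {0..}"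
      unfolding g_def by (rule has_integral_add[OF i1 i2])
    have le: "g x \<le> exp (- q * x) * W x" if "x \<in> {0..}" for x
    proof (cases "x \<ge> y")
      case True
      then have "W y \<le> W x" using \<open>y > 0\<close> that by (intro strict_mono_on_leD[OF W_mono]) auto
      then show ?thesis using True unfolding g_def by (simp add: algebra_simps)
    next
      case False
      have "W 0 \<le> W x" using that by (intro strict_mono_on_leD[OF W_mono]) auto
      then have "- a \<le> W x" unfolding a_def by linarith
      then have "- a * exp (- q * x) \<le> W x * exp (- q * x)" by (intro mult_right_mono) auto
      then have "- a * exp (- q * x) \<le> exp (- q * x) * W x" by (simp add: mult.commute)
      then show ?thesis using False unfolding g_def by simp
    qed
    have "- a * (exp (- q * 0) / q) + (W y + a) * (exp (- q * y) / q) \<le> 1 / Psi \<gamma> \<sigma> \<pi> q"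
      by (rule has_integral_le[OF ig W_laplace[OF q0] le])
    also have "1 / Psi \<gamma> \<sigma> \<pi> q \<le> 1 / (\<gamma> * q)"
    proof -
      have p1: "\<gamma> * q \<le> Psi \<gamma> \<sigma> \<pi> q" by (rule Psi_ge[OF q0 gamma_pos])
      have p2: "0 < \<gamma> * q" using gamma_pos q0 by simp
      have p3: "0 < Psi \<gamma> \<sigma> \<pi> q" using p1 p2 by linarith
      show ?thesis by (rule divide_left_mono[OF p1]) (use p2 p3 in simp_all)
    qed
    finally have "- a * y + (W y + a) * (exp (- 1) * y) \<le> y / \<gamma>"
      using qy True unfolding q_def by (simp add: field_simps)
    then have "y * (- a + (W y + a) * exp (- 1)) \<le> y * (1 / \<gamma>)"
      by (simp add: algebra_simps)
    then have "- a + (W y + a) * exp (- 1) \<le> 1 / \<gamma>"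
      using True by (rule mult_left_le_imp_le)
    then have "(W y + a) * exp (- 1) \<le> 1 / \<gamma> + a" by linarith
    then have "(W y + a) * exp (- 1) * exp 1 \<le> (1 / \<gamma> + a) * exp 1"
      by (intro mult_right_mono) auto
    then have "W y + a \<le> (1 / \<gamma> + a) * exp 1"
    proof -
      have "exp (- 1) * exp 1 = (1::real)" by (simp add: exp_add[symmetric])
      then have "(W y + a) * exp (- 1) * exp 1 = W y + a" by (simp add: mult.assoc)
      then show ?thesis using \<open>(W y + a) * exp (- 1) * exp 1 \<le> (1 / \<gamma> + a) * exp 1\<close> by linarith
    qed
    then show ?thesis unfolding M_def using a0 by (simp add: algebra_simps)
  qed
  then show ?thesis using M0 by blast
qed

lemma main_bound:
  fixes R W :: "real \<Rightarrow> real" and M b :: real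
  assumes R_cont: "continuous_on {0..} R"
    and R_pos: "\<And>x. x > 0 \<Longrightarrow> R x > 0"
    and R_tail: "\<exists>c>0. (\<lambda>x. 1 / R x) integrable_on {c..}"
    and b0: "b > 0" and M0: "M \<ge> 0" and WM: "\<And>y. W y \<le> M"
  shows "\<exists>F0\<ge>0. \<forall>n. Wn W R n b \<le> ennreal (M ^ n * F0 ^ n / fact n)"
proof -
  define \<rho> where "\<rho> = (\<lambda>z. 1 / R (max z b))"
  have Rmax: "R (max z b) > 0" for z using b0 by (intro R_pos) auto
  have \<rho>pos: "\<rho> z > 0" for z unfolding \<rho>_def using Rmax[of z] by simp
  have "continuous_on UNIV (\<lambda>z. R (max z b))"
    by (rule continuous_on_compose2[OF R_cont]) (use b0 in \<open>auto intro!: continuous_intros\<close>)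
  then have \<rho>cont: "continuous_on UNIV \<rho>"
    unfolding \<rho>_def using Rmax by (intro continuous_on_divide continuous_intros) (auto simp: less_le)
  have \<rho>int: "\<rho> integrable_on {u..v}" for u v
    by (rule integrable_continuous_interval) (rule continuous_on_subset[OF \<rho>cont], auto)
  define P where "P = (\<lambda>z. integral {b-1..z} \<rho>)"
  have Pmono: "mono P"
  proof (rule monoI)
    fix x y :: real assume "x \<le> y"
    then show "P x \<le> P y" unfolding P_def
      by (intro integral_subset_le \<rho>int) (auto intro: less_imp_le[OF \<rho>pos])
  qed
  have derivP: "(P has_real_derivative \<rho> x) (at x)" if "x \<ge> b" for x
  proof -
    have "(P has_real_derivative \<rho> x) (at x within {b-1..x+1})"
      unfolding P_def using that
      by (intro integral_has_real_derivative continuous_on_subset[OF \<rho>cont]) auto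
    moreover have "x \<in> interior {b-1..x+1}" using that by (simp add: interior_atLeastAtMost_real)
    ultimately show ?thesis by (metis at_within_interior)
  qed
  obtain c where c0: "c > 0" and cint: "(\<lambda>x. 1 / R x) integrable_on {c..}" using R_tail by blast
  define d where "d = max b c"
  define B where "B = integral {b-1..d} \<rho> + integral {c..} (\<lambda>x. 1 / R x)"
  have intc0: "0 \<le> integral {c..} (\<lambda>x. 1 / R x)"
    using c0 by (intro Henstock_Kurzweil_Integration.integral_nonneg cint)
      (auto intro: less_imp_le[OF R_pos])
  have PB: "P z \<le> B" for z
  proof (cases "z \<le> d")
    case True
    have "P z \<le> integral {b-1..d} \<rho>" unfolding P_def using True
      by (intro integral_subset_le \<rho>int) (auto intro: less_imp_le[OF \<rho>pos])
    then show ?thesis unfolding B_def using intc0 by linarith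
  next
    case False
    have db: "b - 1 \<le> d" unfolding d_def by auto
    have "P z = integral {b-1..d} \<rho> + integral {d..z} \<rho>" unfolding P_def
      using Henstock_Kurzweil_Integration.integral_combine[OF db _ \<rho>int, of z] False by simp
    also have "integral {d..z} \<rho> = integral {d..z} (\<lambda>x. 1 / R x)"
      by (intro integral_cong) (auto simp: \<rho>_def d_def max_absorb1)
    also have "\<dots> \<le> integral {c..} (\<lambda>x. 1 / R x)"
    proof (intro integral_subset_le cint)
      show "{d..z} \<subseteq> {c..}" unfolding d_def by auto
      have "continuous_on {d..z} R" by (rule continuous_on_subset[OF R_cont]) (use c0 in \<open>auto simp: d_def\<close>)
      then show "(\<lambda>x. 1 / R x) integrable_on {d..z}"
      proof -
        have "\<forall>x\<in>{d..z}. R x \<noteq> 0"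
        proof
          fix x assume "x \<in> {d..z}"
          then have "x > 0" using c0 unfolding d_def by auto
          then show "R x \<noteq> 0" using R_pos[of x] by simp
        qed
        then show ?thesis using \<open>continuous_on {d..z} R\<close>
          by (intro integrable_continuous_interval continuous_on_divide continuous_intros) auto
      qed
      show "\<forall>x\<in>{c..}. 0 \<le> 1 / R x" using c0 by (auto intro: less_imp_le[OF R_pos])
    qed
    finally show ?thesis unfolding B_def by linarith
  qed
  define T where "T = (SUP n. P (real n))"
  have "(\<lambda>n. P (real n)) \<longlonglongrightarrow> T" unfolding T_def
  proof (rule LIMSEQ_incseq_SUP)
    show "bdd_above (range (\<lambda>n. P (real n)))" using PB by (intro bdd_aboveI[of _ B]) auto
    show "incseq (\<lambda>n. P (real n))" using Pmono by (auto simp: incseq_def monoD)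
  qed
  then have Plim: "(P \<longlongrightarrow> T) at_top" by (rule tendsto_at_topI_sequentially_real[OF Pmono])
  have PT: "P x \<le> T" for x
    by (rule tendsto_lowerbound[OF Plim]) (auto intro!: eventually_mono[OF eventually_ge_at_top[of x]] monoD[OF Pmono])
  have Plim0: "((\<lambda>z. T - P z) \<longlongrightarrow> 0) at_top"
    using tendsto_diff[OF tendsto_const[of T] Plim] by simp
  have Pcont: "continuous_on {b..} P"
    using derivP by (intro continuous_at_imp_continuous_on ballI DERIV_isCont) auto
  have Pmcont: "continuous_on UNIV (\<lambda>z. P (max z b))"
    by (rule continuous_on_compose2[OF Pcont]) (auto intro!: continuous_intros)
  have claim: "x \<ge> b \<Longrightarrow> Wn W R n x \<le> ennreal (M ^ n * (T - P x) ^ n / fact n)" for n x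
  proof (induction n arbitrary: x)
    case 0
    then show ?case by simp
  next
    case (Suc n)
    define C where "C = M ^ Suc n / fact n"
    have C0: "C \<ge> 0" unfolding C_def using M0 by simp
    define f where "f = (\<lambda>z. C * \<rho> z * (T - P (max z b)) ^ n)"
    define G where "G = (\<lambda>z. - (C * (T - P z) ^ Suc n / real (Suc n)))"
    have FTC: "(\<integral>\<^sup>+z. ennreal (f z) * indicator {x..} z \<partial>lborel) = 0 - G x"
    proof (rule nn_integral_FTC_atLeast)
      show "f \<in> borel_measurable borel" unfolding f_def
        by (intro borel_measurable_continuous_onI continuous_intros \<rho>cont Pmcont)
      show "DERIV G y :> f y" if "x \<le> y" for y
      proof -
        have yb: "y \<ge> b" using that Suc.prems by simp
        have "DERIV G y :> - (C * (real (Suc n) * (T - P y) ^ n * (0 - \<rho> y)) / real (Suc n))"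
          unfolding G_def by (rule derivative_eq_intros derivP[OF yb] refl | simp)+
        then show ?thesis unfolding f_def using yb by (simp add: max_absorb1 ac_simps)
      qed
      show "0 \<le> f y" if "x \<le> y" for y
        unfolding f_def using C0 PT[of "max y b"] by (intro mult_nonneg_nonneg less_imp_le[OF \<rho>pos] zero_le_power) auto
      show "(G \<longlongrightarrow> 0) at_top"
        unfolding G_def using tendsto_minus[OF tendsto_divide[OF tendsto_mult[OF tendsto_const[of C] tendsto_power[OF Plim0, of "Suc n"]] tendsto_const[of "real (Suc n)"]]]
        by simp
    qed
    have Gx: "0 - G x = M ^ Suc n * (T - P x) ^ Suc n / fact (Suc n)"
      unfolding G_def C_def by (simp add: field_simps)
    have "Wn W R (Suc n) x = (\<integral>\<^sup>+ z. ennreal (W (z - x) / R z) * Wn W R n z * indicator {x..} z \<partial>lborel)"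
      by simp
    also have "\<dots> \<le> (\<integral>\<^sup>+z. ennreal (f z) * indicator {x..} z \<partial>lborel)"
    proof (rule nn_integral_mono)
      fix z
      show "ennreal (W (z - x) / R z) * Wn W R n z * indicator {x..} z \<le> ennreal (f z) * indicator {x..} z"
      proof (cases "z \<ge> x")
        case True
        have zb: "z \<ge> b" using True Suc.prems by simp
        have Rz: "R z > 0" using zb b0 by (intro R_pos) auto
        have "W (z - x) / R z \<le> M * \<rho> z" unfolding \<rho>_def using zb Rz WM[of "z - x"]
          by (simp add: max_absorb1 divide_right_mono)
        then have e1: "ennreal (W (z - x) / R z) \<le> ennreal (M * \<rho> z)" by (rule ennreal_leI)
        have e2: "Wn W R n z \<le> ennreal (M ^ n * (T - P z) ^ n / fact n)" by (rule Suc.IH[OF zb])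
        have "ennreal (W (z - x) / R z) * Wn W R n z \<le> ennreal (M * \<rho> z) * ennreal (M ^ n * (T - P z) ^ n / fact n)"
          by (intro mult_mono e1 e2) auto
        also have "\<dots> = ennreal (M * \<rho> z * (M ^ n * (T - P z) ^ n / fact n))"
          using M0 PT[of z] \<rho>pos[of z] by (intro ennreal_mult[symmetric]) auto
        also have "M * \<rho> z * (M ^ n * (T - P z) ^ n / fact n) = f z"
          unfolding f_def C_def using zb by (simp add: max_absorb1 field_simps)
        finally show ?thesis using True by simp
      next
        case False
        then show ?thesis by simp
      qed
    qed
    also have "\<dots> = ennreal (M ^ Suc n * (T - P x) ^ Suc n / fact (Suc n))"
      using FTC Gx by simp
    finally show ?case .
  qed
  show ?thesis
    using claim[of b] PT[of b] by (intro exI[of _ "T - P b"]) auto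
qed

theorem proposition4p5:
  fixes \<gamma> \<sigma> :: real and \<pi> :: "real measure" and R W :: "real \<Rightarrow> real"
  assumes sigma_nonneg: "\<sigma> \<ge> 0"
    and pi_sets: "sets \<pi> = sets borel"
    and pi_support: "emeasure \<pi> {..0} = 0"
    and pi_int: "(\<integral>\<^sup>+ z\<in>{0<..}. ennreal (min z (z\<^sup>2)) \<partial>\<pi>) < \<infinity>"
    and R_cont: "continuous_on {0..} R"
    and R_pos: "\<And>x. x > 0 \<Longrightarrow> R x > 0"
    and W_neg: "\<And>x. x < 0 \<Longrightarrow> W x = 0"
    and W_cont: "continuous_on {0..} W"
    and W_mono: "strict_mono_on {0..} W"
    and W_laplace: "\<And>q. q > 0 \<Longrightarrow>
          ((\<lambda>y. exp (- q * y) * W y) has_integral (1 / Psi \<gamma> \<sigma> \<pi> q)) {0..}"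
    and gamma_pos: "\<gamma> > 0"
    and R_tail: "\<exists>c>0. (\<lambda>x. 1 / R x) integrable_on {c..}"
  shows "\<forall>b>0. \<forall>l>0. (\<Sum>n. ennreal (l ^ n) * Wn W R n b) < \<infinity>"
proof (intro allI impI)
  fix b l :: real assume b0: "b > 0" and l0: "l > 0"
  obtain M where M0: "M \<ge> 0" and WM: "\<And>y. W y \<le> M"
    using W_bounded[OF W_neg W_mono W_laplace gamma_pos] by blast
  obtain F0 where F0: "F0 \<ge> 0" and WF: "\<And>n. Wn W R n b \<le> ennreal (M ^ n * F0 ^ n / fact n)"
    using main_bound[where W=W and R=R and M=M and b=b, OF R_cont R_pos R_tail b0 M0 WM] by blast
  define x where "x = l * M * F0"
  have x0: "x \<ge> 0" unfolding x_def using l0 M0 F0 by simp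
  have "(\<Sum>n. ennreal (l ^ n) * Wn W R n b) \<le> (\<Sum>n. ennreal (inverse (fact n) * x ^ n))"
  proof (rule suminf_le)
    fix n
    have "ennreal (l ^ n) * Wn W R n b \<le> ennreal (l ^ n) * ennreal (M ^ n * F0 ^ n / fact n)"
      by (intro mult_left_mono WF) auto
    also have "\<dots> = ennreal (l ^ n * (M ^ n * F0 ^ n / fact n))"
      using l0 M0 F0 by (intro ennreal_mult[symmetric]) auto
    also have "l ^ n * (M ^ n * F0 ^ n / fact n) = inverse (fact n) * x ^ n"
      unfolding x_def by (simp add: power_mult_distrib field_simps)
    finally show "ennreal (l ^ n) * Wn W R n b \<le> ennreal (inverse (fact n) * x ^ n)" .
  qed auto
  also have "\<dots> = ennreal (\<Sum>n. inverse (fact n) * x ^ n)"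
    using x0 by (intro suminf_ennreal2 summable_exp) auto
  also have "\<dots> < \<infinity>" by simp
  finally show "(\<Sum>n. ennreal (l ^ n) * Wn W R n b) < \<infinity>" .
qed

end
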